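(* Let $\mathrm{Tr}:\mathsf{SU}(3)\to\mathbb{C}$ be the trace map and $\Delta=\mathrm{Tr}(\mathsf{SU}(3))\subseteq\mathbb{C}$. Then $\mathrm{Tr}$ is a local submersion at almost all points of $\Delta$: for Lebesgue-almost every $z\in\Delta$, the differential of $\mathrm{Tr}$ (viewed as a map to $\mathbb{C}\cong\mathbb{R}^2$) is surjective at every point of $\mathrm{Tr}^{-1}(z)$. *)

theory Defs
  imports "HOL-Analysis.Analysis"
begin

definition adjoint_mat :: "complex^'n^'m \<Rightarrow> complex^'m^'n" where
  "adjoint_mat A = (\<chi> i j. cnj (A $ j $ i))"

definition SU3 :: "(complex^3^3) set" where
  "SU3 = {A. adjoint_mat A ** A = mat 1 \<and> det A = 1}"

text \<open>Tangent space of a subset S of a normed space at a point A: velocities at 0 of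
  curves that stay in S near 0, pass through A at time 0 and are differentiable at 0.
  For the smooth submanifold SU(3) this is the usual tangent space.\<close>
definition tangent_space :: "'a::real_normed_vector set \<Rightarrow> 'a \<Rightarrow> 'a set" where
  "tangent_space S A = {v. \<exists>\<gamma>::real \<Rightarrow> 'a. \<gamma> 0 = A \<and> (\<forall>\<^sub>F t in nhds 0. \<gamma> t \<in> S)
       \<and> (\<gamma> has_vector_derivative v) (at 0)}"

end

theory Submission
  imports Defs "HOL-Computational_Algebra.Fundamental_Theorem_Algebra"
begin

definition crv :: "real \<Rightarrow> complex" where "crv t = 2 * cis t + cis (-2*t)"

lemma negl: "negligible (range crv)"
proof (rule negligible_differentiable_image_lowdim)
  show "DIM(real) < DIM(complex)" by simp
  have "(crv has_derivative (\<lambda>h. h *\<^sub>R (2*(\<i>*cis t)) + (-2*h) *\<^sub>R (\<i> * cis(-2*t)))) (at t)" for t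
    unfolding crv_def by (auto intro!: derivative_eq_intros simp: algebra_simps)
  then show "crv differentiable_on UNIV"
    unfolding differentiable_on_def differentiable_def by (meson has_derivative_at_withinI)
qed

lemma in_crv: assumes "cmod \<mu> = 1" shows "2*\<mu> + 1/\<mu>^2 \<in> range crv"
proof -
  have "\<mu> \<noteq> 0" using assms by auto
  have m: "cis (Arg \<mu>) = \<mu>" using assms \<open>\<mu> \<noteq> 0\<close> by (simp add: cis_Arg sgn_div_norm)
  have d: "cis (Arg \<mu>) * cis (Arg \<mu>) = cis (Arg \<mu> + Arg \<mu>)" by (rule cis_mult)
  then have "cis (2 * Arg \<mu>) = \<mu>^2" by (simp only: m mult_2 power2_eq_square)
  then have "cis (-(2 * Arg \<mu>)) = inverse (\<mu>^2)" using cis_inverse[of "2 * Arg \<mu>"] by simp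
  then have "cis (-2 * Arg \<mu>) = 1/\<mu>^2" by (simp add: inverse_eq_divide)
  then have "crv (Arg \<mu>) = 2*\<mu> + 1/\<mu>^2" by (simp add: crv_def m)
  then show ?thesis by (metis rangeI)
qed

lemma two_roots_sum:
  fixes c r u v :: complex
  assumes "u \<noteq> v" "cnj c * u^2 - r * u + c = 0" "cnj c * v^2 - r * v + c = 0"
  shows "cnj c * (u+v) = r"
proof -
  have "(u - v) * (cnj c * (u+v) - r) = (cnj c * u^2 - r * u + c) - (cnj c * v^2 - r * v + c)"
    by (simp add: algebra_simps power2_eq_square)
  then have "(u - v) * (cnj c * (u+v) - r) = 0" using assms by simp
  then show ?thesis using assms(1) by simp
qed

lemma two_roots:
  fixes c r u v :: complex
  assumes "c \<noteq> 0" "u \<noteq> v" "cnj c * u^2 - r * u + c = 0" "cnj c * v^2 - r * v + c = 0"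
  shows "cmod (u * v) = 1"
proof -
  have "(u - v) * (cnj c * (u+v) - r) = (cnj c * u^2 - r * u + c) - (cnj c * v^2 - r * v + c)"
    by (simp add: algebra_simps power2_eq_square)
  then have "(u - v) * (cnj c * (u+v) - r) = 0" using assms(3,4) by simp
  then have r: "r = cnj c * (u+v)" using assms(2) by simp
  have "cnj c * (u * v) = c" using assms(3) unfolding r by (simp add: algebra_simps power2_eq_square)
  then have "cmod (cnj c) * cmod (u * v) = cmod c" by (metis norm_mult)
  then show ?thesis using assms(1) by simp
qed

lemma roots_curve:
  fixes c r w1 w2 w3 :: complex
  assumes c: "c \<noteq> 0" and q: "cnj c * w1^2 - r * w1 + c = 0" "cnj c * w2^2 - r * w2 + c = 0" "cnj c * w3^2 - r * w3 + c = 0"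
    and p: "w1*w2*w3 = 1"
  shows "w1 + w2 + w3 \<in> range crv"
proof -
  have key: "2*\<mu> + \<nu> \<in> range crv" if "\<mu>^2*\<nu> = 1" "\<nu> = \<mu> \<or> cmod (\<mu> * \<nu>) = 1" for \<mu> \<nu> :: complex
  proof -
    have "cmod \<mu> = 1"
      using that(2)
    proof
      assume "\<nu> = \<mu>"
      then have "cmod \<mu> ^ 3 = 1" using that(1) by (metis norm_one norm_power power3_eq_cube power2_eq_square)
      then show ?thesis using power_eq_iff_eq_base[of 3 "cmod \<mu>" 1] by simp
    next
      assume "cmod (\<mu> * \<nu>) = 1"
      moreover have "cmod \<mu> * cmod (\<mu> * \<nu>) = 1" using that(1)
        by (metis mult.assoc norm_mult norm_one power2_eq_square)
      ultimately show ?thesis by simp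
    qed
    moreover have "\<nu> = 1/\<mu>^2" using that(1) by (metis divide_eq_eq mult.commute mult_zero_left zero_neq_one)
    ultimately show ?thesis using in_crv by simp
  qed
  have d: "cmod (u * v) = 1" if "u \<noteq> v" "u \<in> {w1,w2,w3}" "v \<in> {w1,w2,w3}" for u v
    using two_roots[OF c that(1)] q that by auto
  show ?thesis
  proof (cases "w1 = w2")
    case True
    then show ?thesis using key[of w1 w3] d[of w1 w3] p by (auto simp: power2_eq_square)
  next
    case False
    show ?thesis
    proof (cases "w1 = w3")
      case True
      then show ?thesis using key[of w1 w2] d[of w1 w2] p by (auto simp: power2_eq_square algebra_simps)
    next
      case False2: False
      show ?thesis
      proof (cases "w2 = w3")
        case True
        then show ?thesis using key[of w2 w1] d[of w2 w1] p by (auto simp: power2_eq_square algebra_simps)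
      next
        case False
        have "cnj c * (w1 + w2) = r" "cnj c * (w1 + w3) = r"
          using two_roots_sum[of w1 w2 c r] two_roots_sum[of w1 w3 c r] q \<open>w1 \<noteq> w2\<close> False2 by auto
        then have "w2 = w3" using c by (metis add_left_cancel complex_cnj_zero_iff mult_cancel_left)
        then show ?thesis using False by simp
      qed
    qed
  qed
qed


lemma QA_det:
  fixes A :: "complex^3^3"
  assumes QA: "\<And>p q. cnj c * (\<Sum>l\<in>UNIV. A$p$l * A$l$q) - r * A$p$q + (if p = q then c else 0) = 0"
    and d: "det (A - mat w) = 0"
  shows "cnj c * w^2 - r * w + c = 0"
proof -
  define L :: "complex^3^3" where "L = (\<chi> i j. cnj c * (A$i$j + (if i = j then w else 0)) - (if i = j then r else 0))"
  have e: "((A - mat w) ** L)$p$q = (cnj c * (\<Sum>l\<in>UNIV. A$p$l * A$l$q) - r * A$p$q + (if p = q then c else 0))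
     - (if p = q then cnj c * w^2 - r * w + c else 0)" for p q
    using exhaust_3[of p] exhaust_3[of q]
    by (auto simp: matrix_matrix_mult_def mat_def L_def sum_3 algebra_simps power2_eq_square)
  have "(A - mat w) ** L = mat (-(cnj c * w^2 - r * w + c))"
    unfolding vec_eq_iff using e QA by (auto simp: mat_def)
  then have "det (A - mat w) * det L = det (mat (-(cnj c * w^2 - r * w + c)) :: complex^3^3)"
    by (metis det_mul)
  also have "\<dots> = (-(cnj c * w^2 - r * w + c))^3"
    by (simp add: det_3 mat_def power3_eq_cube)
  finally have "(-(cnj c * w^2 - r * w + c))^3 = 0" using d by simp
  then show ?thesis by (metis neg_equal_0_iff_equal power_eq_0_iff)
qed

lemma cubic_roots:
  fixes a2 a1 a0 :: complex
  shows "\<exists>w1 w2 w3. w1 + w2 + w3 = -a2 \<and> w1*w2 + w1*w3 + w2*w3 = a1 \<and> w1*w2*w3 = -a0"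
proof -
  obtain w1 where w1: "poly [:a0, a1, a2, 1:] w1 = 0"
    using fundamental_theorem_of_algebra_alt[of "[:a0, a1, a2, 1:]"] by auto
  define b1 where "b1 = a2 + w1"
  define b0 where "b0 = a1 + w1 * b1"
  define s where "s = csqrt (b1^2 - 4*b0)"
  define w2 where "w2 = (-b1 + s)/2"
  define w3 where "w3 = (-b1 - s)/2"
  have s2: "s^2 = b1^2 - 4*b0" by (simp add: s_def)
  have 1: "w2 + w3 = -b1" by (simp add: w2_def w3_def field_simps)
  have "(-b1 + s) * (-b1 - s) = b1^2 - s^2" by (simp add: algebra_simps power2_eq_square)
  also have "\<dots> = 4 * b0" using s2 by simp
  finally have "(-b1 + s) * (-b1 - s) = 4 * b0" .
  then have 2: "w2 * w3 = b0" unfolding w2_def w3_def by simp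
  have 3: "a0 = -(w1 * (w1 * w1 + a2 * w1 + a1))"
    using w1 by (simp add: algebra_simps eq_neg_iff_add_eq_0)
  have "w1 + w2 + w3 = -a2" using 1 by (simp add: b1_def algebra_simps)
  moreover have "w1*w2 + w1*w3 + w2*w3 = a1"
  proof -
    have "w1*w2 + w1*w3 + w2*w3 = w1 * (w2 + w3) + w2 * w3" by (simp add: algebra_simps)
    then show ?thesis using 1 2 by (simp add: b0_def)
  qed
  moreover have "w1*w2*w3 = -a0"
  proof -
    have "w1*w2*w3 = w1 * (w2 * w3)" by (simp add: algebra_simps)
    also have "\<dots> = w1 * (w1 * w1 + a2 * w1 + a1)" using 2 by (simp add: b0_def b1_def algebra_simps)
    finally show ?thesis by (simp add: 3)
  qed
  ultimately show ?thesis by blast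
qed

lemma char_poly3:
  fixes A :: "complex^3^3"
  shows "det (A - mat x) = -(x^3 - trace A * x^2
     + (A$1$1*A$2$2 - A$1$2*A$2$1 + A$1$1*A$3$3 - A$1$3*A$3$1 + A$2$2*A$3$3 - A$2$3*A$3$2) * x - det A)"
  by (simp add: det_3 mat_def trace_def sum_3 algebra_simps power2_eq_square power3_eq_cube)




lemma vd_vec:
  fixes f :: "real \<Rightarrow> 'a::real_normed_vector ^ 'n"
  shows "(f has_vector_derivative f') F \<longleftrightarrow> (\<forall>i. ((\<lambda>t. f t $ i) has_vector_derivative f' $ i) F)"
proof
  assume "(f has_vector_derivative f') F"
  then have d: "(f has_derivative (\<lambda>h. h *\<^sub>R f')) F" by (simp add: has_vector_derivative_def)
  show "\<forall>i. ((\<lambda>t. f t $ i) has_vector_derivative f' $ i) F"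
  proof
    fix i
    have "((\<lambda>t. f t $ i) has_derivative (\<lambda>h. (h *\<^sub>R f') $ i)) F"
      using bounded_linear.has_derivative[OF bounded_linear_vec_nth d] .
    then show "((\<lambda>t. f t $ i) has_vector_derivative f' $ i) F"
      by (simp add: has_vector_derivative_def)
  qed
next
  assume a: "\<forall>i. ((\<lambda>t. f t $ i) has_vector_derivative f' $ i) F"
  show "(f has_vector_derivative f') F"
    unfolding has_vector_derivative_def has_derivative_def
  proof
    show "bounded_linear (\<lambda>h. h *\<^sub>R f')" by (rule bounded_linear_scaleR_left)
    show "((\<lambda>y. (f y - f (Lim F (\<lambda>x. x)) - (y - Lim F (\<lambda>x. x)) *\<^sub>R f') /\<^sub>R norm (y - Lim F (\<lambda>x. x))) \<longlongrightarrow> 0) F"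
    proof (rule vec_tendstoI)
      fix i
      have "((\<lambda>t. f t $ i) has_derivative (\<lambda>h. h *\<^sub>R f' $ i)) F" using a by (simp add: has_vector_derivative_def)
      then show "((\<lambda>y. ((f y - f (Lim F (\<lambda>x. x)) - (y - Lim F (\<lambda>x. x)) *\<^sub>R f') /\<^sub>R norm (y - Lim F (\<lambda>x. x))) $ i) \<longlongrightarrow> 0 $ i) F"
        unfolding has_derivative_def by simp
    qed
  qed
qed

lemma vd_mat:
  fixes f :: "real \<Rightarrow> 'a::real_normed_vector ^ 'n ^'m"
  shows "(f has_vector_derivative f') F \<longleftrightarrow> (\<forall>i j. ((\<lambda>t. f t $ i $ j) has_vector_derivative f' $ i $ j) F)"
  by (simp add: vd_vec)

lemma vd_matmul:
  fixes F G :: "real \<Rightarrow> complex^3^3"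
  assumes "(F has_vector_derivative F') (at x)" "(G has_vector_derivative G') (at x)"
  shows "((\<lambda>t. F t ** G t) has_vector_derivative (F x ** G' + F' ** G x)) (at x)"
  unfolding vd_mat
proof (intro allI)
  fix i j
  have dF: "((\<lambda>t. F t $ i $ l) has_vector_derivative F' $ i $ l) (at x)" for l using assms(1) vd_mat by blast
  have dG: "((\<lambda>t. G t $ l $ j) has_vector_derivative G' $ l $ j) (at x)" for l using assms(2) vd_mat by blast
  have "((\<lambda>t. \<Sum>l\<in>UNIV. F t $ i $ l * G t $ l $ j) has_vector_derivative
      (\<Sum>l\<in>UNIV. F x $ i $ l * G' $ l $ j + F' $ i $ l * G x $ l $ j)) (at x)"
    by (intro has_vector_derivative_sum has_vector_derivative_mult dF dG)
  then show "((\<lambda>t. (F t ** G t) $ i $ j) has_vector_derivative (F x ** G' + F' ** G x) $ i $ j) (at x)"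
    by (simp add: matrix_matrix_mult_def sum.distrib)
qed



definition blk :: "3 \<Rightarrow> 3 \<Rightarrow> complex \<Rightarrow> complex \<Rightarrow> complex^3^3" where
  "blk j k a b = (\<chi> p q. if p = j \<and> q = j then a else if p = k \<and> q = k then cnj a
     else if p = j \<and> q = k then b else if p = k \<and> q = j then - cnj b else if p = q then 1 else 0)"

definition dblk :: "3 \<Rightarrow> 3 \<Rightarrow> complex \<Rightarrow> complex \<Rightarrow> complex^3^3" where
  "dblk j k a b = (\<chi> p q. if p = j \<and> q = j then a else if p = k \<and> q = k then cnj a
     else if p = j \<and> q = k then b else if p = k \<and> q = j then - cnj b else if p = q then 0 else 0)"

lemma pairs3: "j \<noteq> k \<Longrightarrow> (j,k) \<in> {(1,2),(2,1),(1,3),(3,1),(2,3),(3,2::3)}"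
  using exhaust_3[of j] exhaust_3[of k] by auto

lemma blk_SU3:
  assumes "j \<noteq> k" "cnj a * a + cnj b * b = 1"
  shows "blk j k a b \<in> SU3"
proof -
  have h: "cnj a * a + b * cnj b = 1" "a * cnj a + cnj b * b = 1" "a * cnj a + b * cnj b = 1"
    "cnj b * b + cnj a * a = 1" "cnj b * b + a * cnj a = 1" "b * cnj b + cnj a * a = 1" "b * cnj b + a * cnj a = 1"
    using assms(2) by (simp_all add: ac_simps)
  from pairs3[OF assms(1)] show ?thesis
    by (elim insertE emptyE; simp add: SU3_def adjoint_mat_def vec_eq_iff forall_3 matrix_matrix_mult_def sum_3 mat_def blk_def det_3 assms(2) h)
qed

lemma blk_id: "j \<noteq> k \<Longrightarrow> blk j k 1 0 = mat 1"
  unfolding vec_eq_iff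
proof (intro allI)
  fix p q assume "j \<noteq> k"
  show "blk j k 1 0 $ p $ q = mat 1 $ p $ q"
    unfolding blk_def mat_def vec_lambda_beta
    by (cases "p = j"; cases "q = j"; cases "p=k"; cases "q=k") (simp_all add: \<open>j \<noteq> k\<close>)
qed

lemma adjoint_mult: "adjoint_mat (A ** B) = adjoint_mat B ** adjoint_mat (A :: complex^'n^'m)"
  by (simp add: adjoint_mat_def matrix_matrix_mult_def vec_eq_iff mult.commute)

lemma SU3_mult: assumes "A \<in> SU3" "B \<in> SU3" shows "A ** B \<in> SU3"
proof -
  have "adjoint_mat (A ** B) ** (A ** B) = adjoint_mat B ** (adjoint_mat A ** A) ** B"
    by (simp add: adjoint_mult matrix_mul_assoc)
  then show ?thesis using assms by (simp add: SU3_def det_mul)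
qed

definition gval :: "complex^3^3 \<Rightarrow> 3 \<Rightarrow> 3 \<Rightarrow> complex \<Rightarrow> complex \<Rightarrow> complex" where
  "gval A j k a b = a * A$j$j + cnj a * A$k$k + b * A$k$j - cnj b * A$j$k"

lemma trace_dblk: "j \<noteq> k \<Longrightarrow> trace (A ** dblk j k a b) = gval A j k a b"
  using exhaust_3[of j] exhaust_3[of k]
  by (auto simp: trace_def gval_def dblk_def matrix_matrix_mult_def sum_3 algebra_simps)

lemma vd_if: "(f has_vector_derivative f') F \<Longrightarrow> (g has_vector_derivative g') F \<Longrightarrow>
  ((\<lambda>t. if P then f t else g t) has_vector_derivative (if P then f' else g')) F"
  by (cases P) simp_all

lemma blk_deriv:
  assumes "(\<alpha> has_vector_derivative a) (at x)" "(\<beta> has_vector_derivative b) (at x)"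
  shows "((\<lambda>t. blk j k (\<alpha> t) (\<beta> t)) has_vector_derivative dblk j k a b) (at x)"
  unfolding vd_mat
proof (intro allI)
  fix p q
  have "((\<lambda>t. blk j k (\<alpha> t) (\<beta> t) $ p $ q) has_vector_derivative
     (if p = j \<and> q = j then a else if p = k \<and> q = k then cnj a
     else if p = j \<and> q = k then b else if p = k \<and> q = j then - cnj b else if p = q then 0 else 0)) (at x)"
    unfolding blk_def vec_lambda_beta
    by (intro vd_if has_vector_derivative_cnj has_vector_derivative_minus has_vector_derivative_const assms)
  then show "((\<lambda>t. blk j k (\<alpha> t) (\<beta> t) $ p $ q) has_vector_derivative dblk j k a b $ p $ q) (at x)"
    unfolding dblk_def vec_lambda_beta .
qed



lemma adj_entry: "(adjoint_mat A ** B)$p$q = (\<Sum>l\<in>UNIV. cnj (A$l$p) * B$l$q)"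
  by (simp add: matrix_matrix_mult_def adjoint_mat_def)

lemma bad_trace:
  fixes A :: "complex^3^3"
  assumes A: "A \<in> SU3" and c: "c \<noteq> 0"
    and H: "\<And>p q. cnj c * A$p$q + c * cnj (A$q$p) = (if p = q then r else 0)"
  shows "trace A \<in> range crv"
proof -
  have U: "adjoint_mat A ** A = mat 1" and D: "det A = 1" using A by (auto simp: SU3_def)
  have QA: "cnj c * (\<Sum>l\<in>UNIV. A$p$l * A$l$q) - r * A$p$q + (if p = q then c else 0) = 0" for p q
  proof -
    have "(\<Sum>l\<in>UNIV. (cnj c * A$p$l + c * cnj (A$l$p)) * A$l$q) = (\<Sum>l\<in>UNIV. (if p = l then r else 0) * A$l$q)"
      using H by simp
    also have "\<dots> = r * A$p$q" by (simp add: if_distrib[of "\<lambda>x. x * _"] cong: if_cong)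
    finally have 1: "(\<Sum>l\<in>UNIV. (cnj c * A$p$l + c * cnj (A$l$p)) * A$l$q) = r * A$p$q" .
    have "(\<Sum>l\<in>UNIV. (cnj c * A$p$l + c * cnj (A$l$p)) * A$l$q)
       = cnj c * (\<Sum>l\<in>UNIV. A$p$l * A$l$q) + c * (\<Sum>l\<in>UNIV. cnj (A$l$p) * A$l$q)"
      by (simp add: sum.distrib sum_distrib_left algebra_simps)
    also have "(\<Sum>l\<in>UNIV. cnj (A$l$p) * A$l$q) = (if p = q then 1 else 0)"
      using U adj_entry[of A A p q] by (simp add: mat_def)
    finally show ?thesis using 1 by (auto simp: algebra_simps)
  qed
  define e where "e = A$1$1*A$2$2 - A$1$2*A$2$1 + A$1$1*A$3$3 - A$1$3*A$3$1 + A$2$2*A$3$3 - A$2$3*A$3$2"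
  obtain w1 w2 w3 where w: "w1 + w2 + w3 = trace A" "w1*w2 + w1*w3 + w2*w3 = e" "w1*w2*w3 = det A"
    using cubic_roots[of "-trace A" e "-det A"] by auto
  have cp: "det (A - mat x) = -((x - w1)*(x - w2)*(x - w3))" for x
    unfolding char_poly3 e_def[symmetric] w(1,2,3)[symmetric] by (simp add: algebra_simps power2_eq_square power3_eq_cube)
  have q: "cnj c * w^2 - r * w + c = 0" if "w \<in> {w1,w2,w3}" for w
    by (rule QA_det[OF QA]) (use that cp in auto)
  have "w1 + w2 + w3 \<in> range crv"
    by (rule roots_curve[OF c]) (use q w(3) D in auto)
  then show ?thesis using w(1) by simp
qed


definition sgen :: "3 \<Rightarrow> 3 \<Rightarrow> (real \<Rightarrow> complex) \<Rightarrow> (real \<Rightarrow> complex) \<Rightarrow> complex \<Rightarrow> complex \<Rightarrow> bool" where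
  "sgen j k \<alpha> \<beta> a b \<longleftrightarrow> j \<noteq> k \<and> \<alpha> 0 = 1 \<and> \<beta> 0 = 0 \<and> (\<forall>t. cnj (\<alpha> t) * \<alpha> t + cnj (\<beta> t) * \<beta> t = 1)
     \<and> (\<alpha> has_vector_derivative a) (at 0) \<and> (\<beta> has_vector_derivative b) (at 0)"

lemma scaled_deriv:
  assumes "(\<alpha> has_vector_derivative a) (at 0)"
  shows "((\<lambda>t. \<alpha> (s*t)) has_vector_derivative (s *\<^sub>R a)) (at 0)"
proof -
  have "((\<lambda>t. s*t) has_vector_derivative s) (at 0)"
    unfolding has_real_derivative_iff_has_vector_derivative[symmetric]
    by (auto intro!: derivative_eq_intros)
  moreover have "(\<alpha> has_vector_derivative a) (at ((\<lambda>t. s*t) 0))" using assms by simp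
  ultimately show ?thesis using vector_diff_chain_at[of "\<lambda>t. s*t" s 0 \<alpha> a] by (simp add: o_def)
qed

lemma gval_scale: "gval A j k (x *\<^sub>R a) (x *\<^sub>R b) = x *\<^sub>R gval A j k a b"
  by (simp add: gval_def scaleR_conv_of_real algebra_simps)

lemma trace_dblk2: "j1 \<noteq> k1 \<Longrightarrow> j2 \<noteq> k2 \<Longrightarrow>
  trace (A ** (dblk j2 k2 a2 b2 + dblk j1 k1 a1 b1)) = gval A j2 k2 a2 b2 + gval A j1 k1 a1 b1"
  by (simp add: matrix_add_ldistrib trace_add trace_dblk)

lemma solve2:
  fixes v1 v2 z :: complex
  assumes "Im (cnj v1 * v2) \<noteq> 0"
  shows "(Im (cnj z * v2) / Im (cnj v1 * v2)) *\<^sub>R v1 + (Im (cnj v1 * z) / Im (cnj v1 * v2)) *\<^sub>R v2 = z"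
proof -
  define p where "p = Re v1"
  define q where "q = Im v1"
  define r where "r = Re v2"
  define m where "m = Im v2"
  define u where "u = Re z"
  define w where "w = Im z"
  define D where "D = p* m - q*r"
  have D: "Im (cnj v1 * v2) = D" by (simp add: D_def p_def q_def r_def m_def)
  have N1: "Im (cnj z * v2) = u* m - w*r" by (simp add: u_def w_def r_def m_def)
  have N2: "Im (cnj v1 * z) = p*w - q*u" by (simp add: u_def w_def p_def q_def)
  have D0: "D \<noteq> 0" using assms D by simp
  have e1: "(u* m - w*r) * p + (p*w - q*u) * r = u * D" by (simp add: D_def algebra_simps)
  have e2: "(u* m - w*r) * q + (p*w - q*u) * m = w * D" by (simp add: D_def algebra_simps)
  have "(u* m - w*r)/D * p + (p*w - q*u)/D * r = u"
    using e1 D0 by (simp add: divide_simps)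
  moreover have "(u* m - w*r)/D * q + (p*w - q*u)/D * m = w"
    using e2 D0 by (simp add: divide_simps)
  ultimately show ?thesis unfolding D N1 N2
    by (simp add: complex_eq_iff p_def q_def r_def m_def u_def w_def)
qed

lemma tangent_good:
  assumes A: "A \<in> SU3" and g1: "sgen j1 k1 \<alpha>1 \<beta>1 a1 b1" and g2: "sgen j2 k2 \<alpha>2 \<beta>2 a2 b2"
    and nz: "Im (cnj (gval A j1 k1 a1 b1) * gval A j2 k2 a2 b2) \<noteq> 0"
  shows "trace ` tangent_space SU3 A = UNIV"
proof -
  let ?v1 = "gval A j1 k1 a1 b1" and ?v2 = "gval A j2 k2 a2 b2"
  have "z \<in> trace ` tangent_space SU3 A" for z
  proof -
    define x where "x = Im (cnj z * ?v2) / Im (cnj ?v1 * ?v2)"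
    define y where "y = Im (cnj ?v1 * z) / Im (cnj ?v1 * ?v2)"
    define U1 where "U1 = (\<lambda>t. blk j1 k1 (\<alpha>1 (x*t)) (\<beta>1 (x*t)))"
    define U2 where "U2 = (\<lambda>t. blk j2 k2 (\<alpha>2 (y*t)) (\<beta>2 (y*t)))"
    define \<gamma> where "\<gamma> = (\<lambda>t. A ** (U1 t ** U2 t))"
    have U10: "U1 0 = mat 1" using g1 by (simp add: U1_def sgen_def blk_id)
    have U20: "U2 0 = mat 1" using g2 by (simp add: U2_def sgen_def blk_id)
    have "\<gamma> 0 = A" by (simp add: \<gamma>_def U10 U20)
    moreover have "\<forall>\<^sub>F t in nhds 0. \<gamma> t \<in> SU3"
    proof (rule always_eventually, intro allI)
      fix t
      have "U1 t \<in> SU3" using g1 unfolding U1_def sgen_def by (intro blk_SU3) auto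
      moreover have "U2 t \<in> SU3" using g2 unfolding U2_def sgen_def by (intro blk_SU3) auto
      ultimately show "\<gamma> t \<in> SU3" unfolding \<gamma>_def using A by (intro SU3_mult)
    qed
    moreover
    have d1: "(U1 has_vector_derivative dblk j1 k1 (x *\<^sub>R a1) (x *\<^sub>R b1)) (at 0)"
      unfolding U1_def using g1 unfolding sgen_def by (intro blk_deriv scaled_deriv) auto
    have d2: "(U2 has_vector_derivative dblk j2 k2 (y *\<^sub>R a2) (y *\<^sub>R b2)) (at 0)"
      unfolding U2_def using g2 unfolding sgen_def by (intro blk_deriv scaled_deriv) auto
    have "(\<gamma> has_vector_derivative (A ** (dblk j2 k2 (y *\<^sub>R a2) (y *\<^sub>R b2) + dblk j1 k1 (x *\<^sub>R a1) (x *\<^sub>R b1)))) (at 0)"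
      using vd_matmul[OF has_vector_derivative_const vd_matmul[OF d1 d2], of A]
      unfolding \<gamma>_def U10 U20 by simp
    moreover have "trace (A ** (dblk j2 k2 (y *\<^sub>R a2) (y *\<^sub>R b2) + dblk j1 k1 (x *\<^sub>R a1) (x *\<^sub>R b1))) = z"
    proof -
      have "trace (A ** (dblk j2 k2 (y *\<^sub>R a2) (y *\<^sub>R b2) + dblk j1 k1 (x *\<^sub>R a1) (x *\<^sub>R b1)))
          = y *\<^sub>R ?v2 + x *\<^sub>R ?v1"
        using g1 g2 by (simp add: trace_dblk2 sgen_def gval_scale)
      also have "\<dots> = z" using solve2[OF nz, of z] by (simp add: x_def y_def add.commute)
      finally show ?thesis .
    qed
    ultimately show ?thesis unfolding tangent_space_def by blast
  qed
  then show ?thesis by auto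
qed



definition cisl :: "real \<Rightarrow> complex" where "cisl t = of_real (cos t) + \<i> * of_real (sin t)"
definition cosl :: "real \<Rightarrow> complex" where "cosl t = of_real (cos t)"
definition sinl :: "real \<Rightarrow> complex" where "sinl t = of_real (sin t)"
definition isinl :: "real \<Rightarrow> complex" where "isinl t = \<i> * of_real (sin t)"

lemma cisl_d: "(cisl has_vector_derivative \<i>) (at 0)"
proof -
  have "(cisl has_vector_derivative (of_real (- sin 0) + \<i> * of_real (cos 0))) (at 0)"
    unfolding cisl_def by (intro derivative_intros has_vector_derivative_of_real) (auto intro!: derivative_eq_intros)
  then show ?thesis by simp
qed

lemma cosl_d: "(cosl has_vector_derivative 0) (at 0)"
proof -
  have "(cosl has_vector_derivative (of_real (- sin 0))) (at 0)"
    unfolding cosl_def by (intro has_vector_derivative_of_real) (auto intro!: derivative_eq_intros)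
  then show ?thesis by simp
qed

lemma sinl_d: "(sinl has_vector_derivative 1) (at 0)"
proof -
  have "(sinl has_vector_derivative (of_real (cos 0))) (at 0)"
    unfolding sinl_def by (intro has_vector_derivative_of_real) (auto intro!: derivative_eq_intros)
  then show ?thesis by simp
qed

lemma isinl_d: "(isinl has_vector_derivative \<i>) (at 0)"
proof -
  have "(isinl has_vector_derivative \<i> * of_real (cos 0)) (at 0)"
    unfolding isinl_def by (intro has_vector_derivative_mult_right has_vector_derivative_of_real) (auto intro!: derivative_eq_intros)
  then show ?thesis by simp
qed

lemma sc: "cos t * cos t + sin t * sin t = (1::real)"
  by (metis sin_cos_squared_add3 add.commute)

lemma genD: "j \<noteq> k \<Longrightarrow> sgen j k cisl (\<lambda>_. 0) \<i> 0"
  unfolding sgen_def using cisl_d by (simp add: cisl_def complex_eq_iff sc)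

lemma genR: "j \<noteq> k \<Longrightarrow> sgen j k cosl sinl 0 1"
  unfolding sgen_def using cosl_d sinl_d by (simp add: cosl_def sinl_def complex_eq_iff sc)

lemma genS: "j \<noteq> k \<Longrightarrow> sgen j k cosl isinl 0 \<i>"
  unfolding sgen_def using cosl_d isinl_d by (simp add: cosl_def isinl_def complex_eq_iff sc)



lemma H_from:
  fixes A :: "complex^3^3"
  assumes f: "Im (cnj c * gval A 1 2 \<i> 0) = 0" "Im (cnj c * gval A 1 3 \<i> 0) = 0"
    "Im (cnj c * gval A 1 2 0 1) = 0" "Im (cnj c * gval A 1 3 0 1) = 0" "Im (cnj c * gval A 2 3 0 1) = 0"
    "Im (cnj c * gval A 1 2 0 \<i>) = 0" "Im (cnj c * gval A 1 3 0 \<i>) = 0" "Im (cnj c * gval A 2 3 0 \<i>) = 0"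
  shows "cnj c * A$p$q + c * cnj (A$q$p) = (if p = q then of_real (2 * Re (cnj c * A$1$1)) else 0)"
proof -
  define b where "b = (\<lambda>p q. cnj c * A$p$q)"
  have gD: "cnj c * gval A j k \<i> 0 = \<i> * (b j j - b k k)" for j k
    by (simp add: gval_def b_def algebra_simps)
  have gR: "cnj c * gval A j k 0 1 = b k j - b j k" for j k
    by (simp add: gval_def b_def algebra_simps)
  have gS: "cnj c * gval A j k 0 \<i> = \<i> * (b k j + b j k)" for j k
    by (simp add: gval_def b_def algebra_simps)
  have r: "Re (b 1 1) = Re (b 2 2)" "Re (b 1 1) = Re (b 3 3)"
    using f(1,2) unfolding gD by simp_all
  have i: "Im (b 2 1) = Im (b 1 2)" "Im (b 3 1) = Im (b 1 3)" "Im (b 3 2) = Im (b 2 3)"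
    using f(3,4,5) unfolding gR by simp_all
  have s: "Re (b 2 1) + Re (b 1 2) = 0" "Re (b 3 1) + Re (b 1 3) = 0" "Re (b 3 2) + Re (b 2 3) = 0"
    using f(6,7,8) unfolding gS by simp_all
  have e: "cnj c * A$p$q + c * cnj (A$q$p) = b p q + cnj (b q p)" by (simp add: b_def)
  have "b p q + cnj (b q p) = (if p = q then of_real (2 * Re (b 1 1)) else 0)"
    using exhaust_3[of p] exhaust_3[of q] r i s
    by (elim disjE; simp add: complex_eq_iff; linarith)
  then show ?thesis unfolding e by (simp add: b_def)
qed

lemma good_case:
  fixes A :: "complex^3^3"
  assumes A: "A \<in> SU3" and nb: "trace A \<notin> range crv"
  shows "trace ` tangent_space SU3 A = UNIV"
proof (rule ccontr)
  assume ng: "trace ` tangent_space SU3 A \<noteq> UNIV"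
  define V where "V = {gval A 1 2 \<i> 0, gval A 1 3 \<i> 0, gval A 1 2 0 1, gval A 1 3 0 1, gval A 2 3 0 1,
     gval A 1 2 0 \<i>, gval A 1 3 0 \<i>, gval A 2 3 0 \<i>}"
  have gen: "\<exists>j k \<alpha> \<beta> a b. sgen j k \<alpha> \<beta> a b \<and> x = gval A j k a b" if "x \<in> V" for x
  proof -
    have "sgen 1 2 cisl (\<lambda>_. 0) \<i> 0" "sgen 1 3 cisl (\<lambda>_. 0) \<i> 0"
      "sgen 1 2 cosl sinl 0 1" "sgen 1 3 cosl sinl 0 1" "sgen 2 3 cosl sinl 0 1"
      "sgen 1 2 cosl isinl 0 \<i>" "sgen 1 3 cosl isinl 0 \<i>" "sgen 2 3 cosl isinl 0 \<i>"
      by (simp_all add: genD genR genS)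
    then show ?thesis using that unfolding V_def by blast
  qed
  have col: "Im (cnj x * y) = 0" if xV: "x \<in> V" and yV: "y \<in> V" for x y
  proof (rule ccontr)
    assume nz: "Im (cnj x * y) \<noteq> 0"
    obtain j1 k1 \<alpha>1 \<beta>1 a1 b1 where g1: "sgen j1 k1 \<alpha>1 \<beta>1 a1 b1" "x = gval A j1 k1 a1 b1"
      using gen[OF xV] by blast
    obtain j2 k2 \<alpha>2 \<beta>2 a2 b2 where g2: "sgen j2 k2 \<alpha>2 \<beta>2 a2 b2" "y = gval A j2 k2 a2 b2"
      using gen[OF yV] by blast
    show False using tangent_good[OF A g1(1) g2(1)] nz g1(2) g2(2) ng by simp
  qed
  obtain c where c: "c \<noteq> 0" "\<And>y. y \<in> V \<Longrightarrow> Im (cnj c * y) = 0"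
  proof (cases "\<exists>x\<in>V. x \<noteq> 0")
    case True
    then obtain x where "x \<in> V" "x \<noteq> 0" by blast
    then show ?thesis using that[of x] col by blast
  next
    case False
    then have "\<And>y. y \<in> V \<Longrightarrow> Im (cnj 1 * y) = 0" by auto
    then show ?thesis using that[of 1] by simp
  qed
  have "cnj c * A$p$q + c * cnj (A$q$p) = (if p = q then of_real (2 * Re (cnj c * A$1$1)) else 0)" for p q
    by (rule H_from; rule c(2); simp add: V_def)
  then have "trace A \<in> range crv" by (rule bad_trace[OF A c(1)])
  then show False using nb by simp
qed

theorem proposition6p1:
  shows "AE z in lebesgue. z \<in> trace ` SU3 \<longrightarrow>
           (\<forall>A\<in>SU3. trace A = z \<longrightarrow> trace ` tangent_space SU3 A = (UNIV :: complex set))"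
proof -
  have "AE z in lebesgue. z \<notin> range crv"
    by (rule AE_I'[of "range crv"]) (use negl negligible_iff_null_sets in auto)
  then show ?thesis
    by eventually_elim (use good_case in blast)
qed


end
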